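(* Consider the wireless network described in the context, with nodes sending independent codewords under decode-and-forward. Run the nearest neighbor set algorithm (NNSA), which produces a finite set of candidate routes from node $1$ to node $D$. Then every candidate route that attains the largest value of $R_{\mathrm{DF}}$ among the candidates is optimal for DF, i.e., its rate equals $R_{\mathrm{DF}}^{\max}$.
   Context: Network: a finite set of nodes $\mathcal{S}=\{1,2,\dots,D\}$, $D\ge 2$. Node $1$ is the source and node $D$ is the destination. Received powers: for distinct nodes $i,t$, the power received at $t$ from $i$ is a positive real number $P_{it}$. All receivers have the same noise power $N>0$. Routes: a route is an ordered tuple of distinct nodes $\mathcal{M}=(m_1,\dots,m_L)$ with $m_1=1$ and $L\ge1$. It is a route from the source to the destination if moreover $m_L=D$. For $a\notin\mathcal{M}$, $\mathcal{M}\cup\{a\}$ denotes $(m_1,\dots,m_L,a)$. DF with independent codewords: the reception rate of node $m_t$ ($2\le t\le L$) in route $\mathcal{M}$ is $$R_{m_t}(\mathcal{M})=\tfrac12\log\Big(1+N^{-1}\sum_{i=1}^{t-1}P_{m_i m_t}\Big).$$ The supported DF rate (for $L\ge2$) is $R_{\mathrm{DF}}(\mathcal{M})=\min_{2\le t\le L}R_{m_t}(\mathcal{M})$. Also $R_{\mathrm{DF}}^{\max}=\max R_{\mathrm{DF}}(\mathcal{M})$ over all routes from $1$ to $D$. Nearest neighbor set: for a route $\mathcal{M}$ with $\mathcal{S}\setminus\mathcal{M}\neq\emptyset$, the nearest neighbor set is the smallest nonempty set $\mathcal{N}\subseteq\mathcal{S}\setminus\mathcal{M}$ with the following property. For all $n\in\mathcal{N}$,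 all $a\in\mathcal{S}\setminus(\mathcal{M}\cup\mathcal{N})$ and all $m\in\mathcal{M}$ we have $P_{mn}\ge P_{ma}$. Moreover, for every pair $(n,a)$ with $n\in\mathcal{N}$ and $a\in\mathcal{S}\setminus(\mathcal{M}\cup\mathcal{N})$, at least one of these inequalities (over $m\in\mathcal{M}$) is strict. NNSA: 1. Start with the single partial route $(1)$. 2. For a partial route $\mathcal{M}$ not containing $D$, compute its nearest neighbor set $\mathcal{N}=\{n_1,\dots,n_{|\mathcal{N}|}\}$, and replace $\mathcal{M}$ by the $|\mathcal{N}|$ routes $\mathcal{M}\cup\{n_i\}$, $i=1,\dots,|\mathcal{N}|$. 3. Repeat step 2 on every partial route until every route contains $D$; such routes end at $D$. The resulting routes are the NNSA candidates. *)

theory Defs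
  imports Complex_Main
begin

text \<open>Nodes are the natural numbers 1..D; node 1 is the source, node D the destination.
  P i t is the received power at t from i; N is the noise power.
  Routes are lists of distinct nodes starting with node 1 (list position k, 0-based,
  corresponds to index t = k+1 in the paper).\<close>

definition nodes :: "nat \<Rightarrow> nat set" where
  "nodes D = {1..D}"

definition is_route :: "nat \<Rightarrow> nat list \<Rightarrow> bool" where
  "is_route D ms \<longleftrightarrow> ms \<noteq> [] \<and> distinct ms \<and> hd ms = 1 \<and> set ms \<subseteq> nodes D"

definition is_route_SD :: "nat \<Rightarrow> nat list \<Rightarrow> bool" where
  "is_route_SD D ms \<longleftrightarrow> is_route D ms \<and> last ms = D"

definition rx_rate :: "(nat \<Rightarrow> nat \<Rightarrow> real) \<Rightarrow> real \<Rightarrow> nat list \<Rightarrow> nat \<Rightarrow> real" where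
  "rx_rate P N ms k = 1/2 * log 2 (1 + (\<Sum>i<k. P (ms ! i) (ms ! k)) / N)"

definition R_DF :: "(nat \<Rightarrow> nat \<Rightarrow> real) \<Rightarrow> real \<Rightarrow> nat list \<Rightarrow> real" where
  "R_DF P N ms = Min {rx_rate P N ms k | k. 1 \<le> k \<and> k < length ms}"

definition R_DF_max :: "nat \<Rightarrow> (nat \<Rightarrow> nat \<Rightarrow> real) \<Rightarrow> real \<Rightarrow> real" where
  "R_DF_max D P N = Max {R_DF P N ms | ms. is_route_SD D ms}"

definition NN_prop :: "nat \<Rightarrow> (nat \<Rightarrow> nat \<Rightarrow> real) \<Rightarrow> nat set \<Rightarrow> nat set \<Rightarrow> bool" where
  "NN_prop D P M Nb \<longleftrightarrow> Nb \<noteq> {} \<and> Nb \<subseteq> nodes D - M \<and>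
     (\<forall>n\<in>Nb. \<forall>a\<in>nodes D - (M \<union> Nb).
        (\<forall>m\<in>M. P m n \<ge> P m a) \<and> (\<exists>m\<in>M. P m n > P m a))"

definition NN_set :: "nat \<Rightarrow> (nat \<Rightarrow> nat \<Rightarrow> real) \<Rightarrow> nat set \<Rightarrow> nat set" where
  "NN_set D P M = (THE Nb. NN_prop D P M Nb \<and> (\<forall>Nb'. NN_prop D P M Nb' \<longrightarrow> Nb \<subseteq> Nb'))"

inductive nnsa_partial :: "nat \<Rightarrow> (nat \<Rightarrow> nat \<Rightarrow> real) \<Rightarrow> nat list \<Rightarrow> bool"
  for D :: nat and P :: "nat \<Rightarrow> nat \<Rightarrow> real" where
  start: "nnsa_partial D P [1]"
| extend: "nnsa_partial D P ms \<Longrightarrow> D \<notin> set ms \<Longrightarrow> n \<in> NN_set D P (set ms)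
             \<Longrightarrow> nnsa_partial D P (ms @ [n])"

definition nnsa_candidates :: "nat \<Rightarrow> (nat \<Rightarrow> nat \<Rightarrow> real) \<Rightarrow> nat list set" where
  "nnsa_candidates D P = {ms. nnsa_partial D P ms \<and> D \<in> set ms}"

end

theory Submission
  imports Defs
begin

lemma sum_nth_set:
  assumes "distinct xs"
  shows "(\<Sum>i<length xs. f (xs ! i)) = (\<Sum>x\<in>set xs. f x)"
  using sum.reindex_bij_betw[OF bij_betw_nth[OF assms refl refl], of f] by simp

lemma nn_chain:
  assumes "NN_prop D P M A" "NN_prop D P M B"
  shows "A \<subseteq> B \<or> B \<subseteq> A"
proof (rule ccontr)
  assume "\<not> (A \<subseteq> B \<or> B \<subseteq> A)"
  then obtain x y where xy: "x \<in> A" "x \<notin> B" "y \<in> B" "y \<notin> A" by blast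
  have "x \<in> nodes D - (M \<union> B)" "y \<in> nodes D - (M \<union> A)"
    using assms xy unfolding NN_prop_def by auto
  then have "\<forall>m\<in>M. P m x \<ge> P m y" "\<exists>m\<in>M. P m y > P m x"
    using assms xy unfolding NN_prop_def by auto
  then obtain m where "m \<in> M" "P m y > P m x" "P m x \<ge> P m y" by blast
  then show False by linarith
qed

lemma nn_exists:
  assumes "nodes D - M \<noteq> {}"
  shows "NN_prop D P M (NN_set D P M)"
proof -
  let ?F = "{Nb. NN_prop D P M Nb}"
  have fin: "finite ?F"
    by (rule finite_subset[of _ "Pow (nodes D)"]) (auto simp: NN_prop_def nodes_def)
  have ne: "?F \<noteq> {}"
  proof -
    have "NN_prop D P M (nodes D - M)" using assms unfolding NN_prop_def by auto
    then show ?thesis by blast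
  qed
  obtain m where m: "m \<in> ?F" "\<forall>b\<in>?F. b \<le> m \<longrightarrow> m = b"
    using finite_has_minimal[OF fin ne] by blast
  have least: "\<forall>Nb'. NN_prop D P M Nb' \<longrightarrow> m \<subseteq> Nb'"
  proof (intro allI impI)
    fix Nb' assume h: "NN_prop D P M Nb'"
    show "m \<subseteq> Nb'"
    proof (cases "Nb' \<subseteq> m")
      case True then show ?thesis using m h by auto
    next
      case False then show ?thesis using nn_chain[OF h, of m] m by auto
    qed
  qed
  have "NN_prop D P M (NN_set D P M) \<and> (\<forall>Nb'. NN_prop D P M Nb' \<longrightarrow> NN_set D P M \<subseteq> Nb')"
    unfolding NN_set_def
    by (rule theI[of _ m]) (use m least in auto)
  then show ?thesis by blast
qed

lemma partial_route:
  assumes "nnsa_partial D P ms" "D \<ge> 2"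
  shows "distinct ms \<and> hd ms = 1 \<and> set ms \<subseteq> nodes D \<and> ms \<noteq> [] \<and> (D \<in> set ms \<longrightarrow> last ms = D)"
  using assms
proof (induction rule: nnsa_partial.induct)
  case start
  then show ?case by (auto simp: nodes_def)
next
  case (extend ms n)
  have "D \<in> nodes D - set ms" using extend by (auto simp: nodes_def)
  then have "NN_prop D P (set ms) (NN_set D P (set ms))" using nn_exists by blast
  then have "n \<in> nodes D - set ms" using extend unfolding NN_prop_def by auto
  then show ?case using extend by auto
qed

lemma rate_mono:
  assumes "N > 0" "0 \<le> a" "a \<le> b"
  shows "1/2 * log 2 (1 + a / N) \<le> 1/2 * log 2 (1 + b / N)"
proof -
  have "a / N \<le> b / N" using assms by (simp add: divide_right_mono)
  moreover have "0 \<le> a / N" using assms by simp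
  ultimately show ?thesis by (simp add: log_mono)
qed

lemma R_DF_le:
  assumes "1 \<le> k" "k < length Q"
  shows "R_DF P N Q \<le> rx_rate P N Q k"
proof -
  have eq: "{rx_rate P N Q k | k. 1 \<le> k \<and> k < length Q} = rx_rate P N Q ` {1..<length Q}"
    by auto
  show ?thesis unfolding R_DF_def eq
    by (rule Min_le) (use assms in auto)
qed

lemma step:
  assumes D2: "D \<ge> 2" and N0: "N > 0"
    and pos: "\<And>i t. i \<in> nodes D \<Longrightarrow> t \<in> nodes D \<Longrightarrow> i \<noteq> t \<Longrightarrow> P i t > 0"
    and Q: "is_route_SD D Q"
    and M: "nnsa_partial D P M" "D \<notin> set M"
  shows "\<exists>n\<in>NN_set D P (set M). R_DF P N Q \<le> rx_rate P N (M @ [n]) (length M)"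
proof -
  have Mr: "distinct M" "hd M = 1" "set M \<subseteq> nodes D" "M \<noteq> []"
    using partial_route[OF M(1) D2] by auto
  have Qr: "distinct Q" "hd Q = 1" "set Q \<subseteq> nodes D" "Q \<noteq> []" "last Q = D"
    using Q unfolding is_route_SD_def is_route_def by auto
  define j where "j = (LEAST i. i < length Q \<and> Q ! i \<notin> set M)"
  have ex: "length Q - 1 < length Q \<and> Q ! (length Q - 1) \<notin> set M"
    using Qr M(2) by (simp add: last_conv_nth)
  have j: "j < length Q" "Q ! j \<notin> set M"
    using LeastI[of "\<lambda>i. i < length Q \<and> Q ! i \<notin> set M", OF ex] unfolding j_def by auto
  have before: "\<And>i. i < j \<Longrightarrow> Q ! i \<in> set M"
  proof -
    fix i assume "i < j"
    then have "\<not> (i < length Q \<and> Q ! i \<notin> set M)"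
      unfolding j_def by (rule not_less_Least)
    then show "Q ! i \<in> set M" using \<open>i < j\<close> j by auto
  qed
  have j0: "j \<noteq> 0"
  proof
    assume "j = 0"
    then have "Q ! 0 \<notin> set M" using j by simp
    moreover have "Q ! 0 = 1" using Qr by (simp add: hd_conv_nth[symmetric])
    moreover have "1 \<in> set M" using Mr by (metis hd_in_set)
    ultimately show False by simp
  qed
  have qjD: "Q ! j \<in> nodes D" using Qr j by auto
  have rQ: "R_DF P N Q \<le> rx_rate P N Q j" using R_DF_le j j0 by simp
  have SQ: "(\<Sum>i<j. P (Q ! i) (Q ! j)) = (\<Sum>x\<in>set (take j Q). P x (Q ! j))"
  proof -
    have "(\<Sum>x\<in>set (take j Q). P x (Q ! j)) = (\<Sum>i<length (take j Q). P (take j Q ! i) (Q ! j))"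
      using sum_nth_set[of "take j Q" "\<lambda>x. P x (Q ! j)"] Qr by simp
    also have "\<dots> = (\<Sum>i<j. P (Q ! i) (Q ! j))"
      using j by (intro sum.cong) auto
    finally show ?thesis by simp
  qed
  have sub: "set (take j Q) \<subseteq> set M"
  proof
    fix x assume "x \<in> set (take j Q)"
    then obtain i where "i < length (take j Q)" "x = take j Q ! i" by (auto simp: in_set_conv_nth)
    then show "x \<in> set M" using before by auto
  qed
  have nonneg: "\<And>m. m \<in> set M \<Longrightarrow> 0 \<le> P m (Q ! j)"
    using pos qjD Mr j by (metis less_imp_le subsetD)
  have S1: "(\<Sum>x\<in>set (take j Q). P x (Q ! j)) \<le> (\<Sum>m\<in>set M. P m (Q ! j))"
    by (rule sum_mono2) (use sub nonneg in auto)
  have S0: "0 \<le> (\<Sum>x\<in>set (take j Q). P x (Q ! j))"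
    using sub nonneg by (intro sum_nonneg) auto
  have NNp: "NN_prop D P (set M) (NN_set D P (set M))"
  proof (rule nn_exists)
    have "D \<in> nodes D - set M" using M(2) D2 by (auto simp: nodes_def)
    then show "nodes D - set M \<noteq> {}" by blast
  qed
  obtain n where n: "n \<in> NN_set D P (set M)" "(\<Sum>m\<in>set M. P m (Q ! j)) \<le> (\<Sum>m\<in>set M. P m n)"
  proof (cases "Q ! j \<in> NN_set D P (set M)")
    case True then show ?thesis using that by blast
  next
    case False
    obtain n where n: "n \<in> NN_set D P (set M)" using NNp unfolding NN_prop_def by blast
    have "Q ! j \<in> nodes D - (set M \<union> NN_set D P (set M))" using False qjD j by auto
    then have "\<forall>m\<in>set M. P m n \<ge> P m (Q ! j)" using NNp n unfolding NN_prop_def by blast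
    then have "(\<Sum>m\<in>set M. P m (Q ! j)) \<le> (\<Sum>m\<in>set M. P m n)" by (intro sum_mono) auto
    then show ?thesis using that n by blast
  qed
  have newsum: "(\<Sum>i<length M. P ((M @ [n]) ! i) ((M @ [n]) ! length M)) = (\<Sum>m\<in>set M. P m n)"
  proof -
    have "(\<Sum>i<length M. P ((M @ [n]) ! i) ((M @ [n]) ! length M)) = (\<Sum>i<length M. P (M ! i) n)"
      by (intro sum.cong) (auto simp: nth_append)
    also have "\<dots> = (\<Sum>m\<in>set M. P m n)" using sum_nth_set[OF Mr(1), of "\<lambda>m. P m n"] by simp
    finally show ?thesis .
  qed
  have "rx_rate P N Q j \<le> rx_rate P N (M @ [n]) (length M)"
    unfolding rx_rate_def newsum SQ
    by (rule rate_mono[OF N0 S0]) (use S1 n in linarith)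
  then have "R_DF P N Q \<le> rx_rate P N (M @ [n]) (length M)" using rQ by linarith
  then show ?thesis using n(1) by blast
qed

lemma reach:
  assumes D2: "D \<ge> 2" and N0: "N > 0"
    and pos: "\<And>i t. i \<in> nodes D \<Longrightarrow> t \<in> nodes D \<Longrightarrow> i \<noteq> t \<Longrightarrow> P i t > 0"
    and Q: "is_route_SD D Q"
  shows "nnsa_partial D P M \<Longrightarrow> (\<forall>k. 1 \<le> k \<and> k < length M \<longrightarrow> R_DF P N Q \<le> rx_rate P N M k)
    \<Longrightarrow> \<exists>c. nnsa_partial D P c \<and> D \<in> set c \<and> (\<forall>k. 1 \<le> k \<and> k < length c \<longrightarrow> R_DF P N Q \<le> rx_rate P N c k)"
proof (induction "card (nodes D - set M)" arbitrary: M rule: less_induct)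
  case (less M)
  show ?case
  proof (cases "D \<in> set M")
    case True then show ?thesis using less.prems by blast
  next
    case False
    obtain n where n: "n \<in> NN_set D P (set M)" "R_DF P N Q \<le> rx_rate P N (M @ [n]) (length M)"
      using step[OF D2 N0 pos Q less.prems(1) False] by blast
    have NNp: "NN_prop D P (set M) (NN_set D P (set M))"
    proof (rule nn_exists)
      have "D \<in> nodes D - set M" using False D2 by (auto simp: nodes_def)
      then show "nodes D - set M \<noteq> {}" by blast
    qed
    have nin: "n \<in> nodes D - set M" using NNp n unfolding NN_prop_def by blast
    have part: "nnsa_partial D P (M @ [n])"
      using less.prems(1) False n(1) by (rule nnsa_partial.extend)
    have old: "\<And>k. k < length M \<Longrightarrow> rx_rate P N (M @ [n]) k = rx_rate P N M k"
    proof -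
      fix k assume k: "k < length M"
      have "(\<Sum>i<k. P ((M @ [n]) ! i) ((M @ [n]) ! k)) = (\<Sum>i<k. P (M ! i) (M ! k))"
        using k by (intro sum.cong) (auto simp: nth_append)
      then show "rx_rate P N (M @ [n]) k = rx_rate P N M k" unfolding rx_rate_def by simp
    qed
    have inv: "\<forall>k. 1 \<le> k \<and> k < length (M @ [n]) \<longrightarrow> R_DF P N Q \<le> rx_rate P N (M @ [n]) k"
    proof (intro allI impI)
      fix k assume k: "1 \<le> k \<and> k < length (M @ [n])"
      show "R_DF P N Q \<le> rx_rate P N (M @ [n]) k"
      proof (cases "k < length M")
        case True then show ?thesis using old less.prems(2) k by auto
      next
        case False then have "k = length M" using k by simp
        then show ?thesis using n(2) by simp
      qed
    qed
    have fin: "finite (nodes D - set M)" by (simp add: nodes_def)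
    have eq: "nodes D - set (M @ [n]) = (nodes D - set M) - {n}" by auto
    have "card (nodes D - set (M @ [n])) < card (nodes D - set M)"
      unfolding eq using card_Diff1_less[OF fin nin] .
    then show ?thesis using less.hyps part inv by blast
  qed
qed

theorem theorem2:
  fixes D :: nat and P :: "nat \<Rightarrow> nat \<Rightarrow> real" and N :: real and ms :: "nat list"
  assumes "D \<ge> 2"
    and "N > 0"
    and "\<And>i t. i \<in> nodes D \<Longrightarrow> t \<in> nodes D \<Longrightarrow> i \<noteq> t \<Longrightarrow> P i t > 0"
    and "ms \<in> nnsa_candidates D P"
    and "\<And>ms'. ms' \<in> nnsa_candidates D P \<Longrightarrow> R_DF P N ms' \<le> R_DF P N ms"
  shows "R_DF P N ms = R_DF_max D P N"
proof -
  have cand_route: "is_route_SD D c" if "c \<in> nnsa_candidates D P" for c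
    using that partial_route[of D P c] assms(1)
    unfolding nnsa_candidates_def is_route_SD_def is_route_def by auto
  let ?R = "{ms. is_route_SD D ms}"
  have finR: "finite ?R"
  proof (rule finite_subset)
    show "?R \<subseteq> {xs. set xs \<subseteq> nodes D \<and> length xs \<le> D}"
    proof
      fix xs assume "xs \<in> ?R"
      then have "distinct xs" "set xs \<subseteq> nodes D"
        unfolding is_route_SD_def is_route_def by auto
      moreover have "card (nodes D) = D" by (simp add: nodes_def)
      ultimately have "length xs \<le> D"
        by (metis card_mono distinct_card finite_atLeastAtMost nodes_def)
      then show "xs \<in> {xs. set xs \<subseteq> nodes D \<and> length xs \<le> D}" using \<open>set xs \<subseteq> nodes D\<close> by simp
    qed
    show "finite {xs. set xs \<subseteq> nodes D \<and> length xs \<le> D}"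
      by (rule finite_lists_length_le) (simp add: nodes_def)
  qed
  have Seq: "{R_DF P N ms | ms. is_route_SD D ms} = R_DF P N ` ?R" by auto
  have neR: "?R \<noteq> {}"
  proof -
    have "is_route_SD D [1, D]" using assms(1)
      unfolding is_route_SD_def is_route_def nodes_def by auto
    then show ?thesis by blast
  qed
  have ms_route: "is_route_SD D ms" using cand_route assms(4) by blast
  have le: "R_DF P N ms \<le> R_DF_max D P N"
    unfolding R_DF_max_def Seq using finR ms_route by (intro Max_ge) auto
  have "Max (R_DF P N ` ?R) \<in> R_DF P N ` ?R"
    using finR neR by (intro Max_in) auto
  then obtain Q where Q: "is_route_SD D Q" "R_DF_max D P N = R_DF P N Q"
    unfolding R_DF_max_def Seq by auto
  obtain c where c: "nnsa_partial D P c" "D \<in> set c"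
      "\<forall>k. 1 \<le> k \<and> k < length c \<longrightarrow> R_DF P N Q \<le> rx_rate P N c k"
  proof -
    have "\<exists>c. nnsa_partial D P c \<and> D \<in> set c \<and> (\<forall>k. 1 \<le> k \<and> k < length c \<longrightarrow> R_DF P N Q \<le> rx_rate P N c k)"
      by (rule reach[OF assms(1) assms(2) _ Q(1)]) (auto intro: assms(3) nnsa_partial.start)
    then show ?thesis using that by blast
  qed
  have ccand: "c \<in> nnsa_candidates D P" using c unfolding nnsa_candidates_def by blast
  have len: "length c \<ge> 2"
  proof -
    have "hd c = 1" "c \<noteq> []" using partial_route[OF c(1) assms(1)] by auto
    then have "1 \<in> set c" by (metis hd_in_set)
    have "card (set c) \<ge> 2"
    proof -
      have "{1, D} \<subseteq> set c" using \<open>1 \<in> set c\<close> c(2) by auto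
      then have "card {1, D} \<le> card (set c)" by (intro card_mono) auto
      then show ?thesis using assms(1) by simp
    qed
    then show ?thesis using card_length[of c] by linarith
  qed
  have eqc: "{rx_rate P N c k | k. 1 \<le> k \<and> k < length c} = rx_rate P N c ` {1..<length c}" by auto
  have "R_DF P N c \<in> rx_rate P N c ` {1..<length c}"
    unfolding R_DF_def eqc using len by (intro Min_in) auto
  then have "R_DF P N Q \<le> R_DF P N c" using c(3) by auto
  also have "\<dots> \<le> R_DF P N ms" using assms(5) ccand by blast
  finally show ?thesis using le Q(2) by linarith
qed

end
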